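(* Let $\varepsilon\in[0,1)$ and let $T:\Delta\to\Sigma_1$ be a test that $\Delta$-controls for type I error with probability $1-\varepsilon$, i.e. $P(T(P))\le\varepsilon$ for every $P\in\Delta$. Then for every $\delta\in(0,1-\varepsilon]$ the test $T$ can be manipulated with probability $1-\varepsilon-\delta$: there is a strategy $\zeta$ (a finitely supported probability on $\Delta$) such that for every $\omega\in\Omega$, $\zeta(\{P\in\Delta:\omega\notin T(P)\})\ge 1-\varepsilon-\delta$.
   Context: Let $\Omega=\{0,1\}^{\mathbb N}$ (paths) with the product topology; for $\omega\in\Omega$, $t\ge0$, $\omega^t$ is the cylinder of paths agreeing with $\omega$ in the first $t$ coordinates. $\Sigma$ is a fixed $\sigma$-algebra on $\Omega$ containing all cylinders; $\Sigma_1$ is the family of open subsets of $\Omega$ (equivalently, countable unions of cylinders). $\mathbb P$ is the set of finitely additive probabilities on $(\Omega,\Sigma)$. $P\in\mathbb P$ is strongly nonatomic (an "opinion") if for every $E\in\Sigma$ and $\alpha\in[0,1]$ there is $F\in\Sigma$ with $F\subseteq E$ and $P(F)=\alpha P(E)$; $\Delta$ denotes the set of opinions. A test is a function $T:\Delta\to\Sigma_1$. A strategy is a probability measure on $\Delta$ with finite support. *)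

theory Defs
  imports "HOL-Analysis.Analysis"
begin

type_synonym path = "nat \<Rightarrow> bool"
type_synonym fprob = "path set \<Rightarrow> real"

definition cyl :: "path \<Rightarrow> nat \<Rightarrow> path set" where
  "cyl \<omega> t = {\<omega>'. \<forall>i<t. \<omega>' i = \<omega> i}"

text \<open>Sigma_1: open sets of the product topology on {0,1}^N.\<close>
definition open_paths :: "path set \<Rightarrow> bool" where
  "open_paths U \<longleftrightarrow> (\<forall>\<omega>\<in>U. \<exists>t. cyl \<omega> t \<subseteq> U)"

definition fa_prob :: "path set set \<Rightarrow> fprob \<Rightarrow> bool" where
  "fa_prob Sig P \<longleftrightarrow>
     (\<forall>E\<in>Sig. 0 \<le> P E) \<and> P UNIV = 1 \<and>
     (\<forall>E\<in>Sig. \<forall>F\<in>Sig. E \<inter> F = {} \<longrightarrow> P (E \<union> F) = P E + P F)"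

text \<open>Opinions: strongly nonatomic finitely additive probabilities.\<close>
definition opinions :: "path set set \<Rightarrow> fprob set" where
  "opinions Sig = {P. fa_prob Sig P \<and>
     (\<forall>E\<in>Sig. \<forall>\<alpha>::real. 0 \<le> \<alpha> \<and> \<alpha> \<le> 1 \<longrightarrow>
        (\<exists>F\<in>Sig. F \<subseteq> E \<and> P F = \<alpha> * P E))}"

text \<open>A strategy: finitely supported probability on Delta, given by support S and weights w.\<close>
definition strategy :: "fprob set \<Rightarrow> fprob set \<Rightarrow> (fprob \<Rightarrow> real) \<Rightarrow> bool" where
  "strategy \<Delta> S w \<longleftrightarrow> finite S \<and> S \<subseteq> \<Delta> \<and> (\<forall>P\<in>S. 0 \<le> w P) \<and> sum w S = 1"

end

theory Submission
  imports Defs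
begin

definition ultra :: "'a filter \<Rightarrow> bool" where
  "ultra F \<longleftrightarrow> F \<noteq> bot \<and> (\<forall>P. eventually P F \<or> eventually (\<lambda>x. \<not> P x) F)"

lemma max_filter_ultra:
  assumes "F \<noteq> bot"
  assumes max: "\<And>G. G \<noteq> bot \<Longrightarrow> G \<le> F \<Longrightarrow> F = G"
  shows "ultra F"
  unfolding ultra_def
proof (intro conjI allI assms(1))
  fix P
  show "eventually P F \<or> (\<forall>\<^sub>Fx in F. \<not> P x)"
  proof (rule disjCI)
    assume "\<not> (\<forall>\<^sub>Fx in F. \<not> P x)"
    then have "inf F (principal {x. P x}) \<noteq> bot"
      by (simp add: trivial_limit_def eventually_inf_principal)
    then have F: "F = inf F (principal {x. P x})"
      by (rule max) simp
    show "eventually P F"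
      by (subst F) (simp add: eventually_inf_principal)
  qed
qed

lemma ex_ultra:
  fixes F :: "'a filter"
  assumes F: "F \<noteq> bot"
  shows "\<exists>U\<le>F. ultra U"
proof -
  let ?X = "{G. G \<noteq> bot \<and> G \<le> F}"
  let ?R = "{(b, a). a \<noteq> bot \<and> a \<le> b \<and> b \<le> F}"
  have bot_notin_R: "c \<in> Chains ?R \<Longrightarrow> bot \<notin> c" for c
    by (auto simp: Chains_def)
  have [simp]: "Field ?R = ?X"
    by (auto simp: Field_def bot_unique)
  have "\<exists>m\<in>Field ?R. \<forall>a\<in>Field ?R. (m, a) \<in> ?R \<longrightarrow> a = m"
  proof (rule Zorns_po_lemma)
    show "Partial_order ?R"
      by (auto simp: partial_order_on_def preorder_on_def
          antisym_def refl_on_def trans_def Field_def bot_unique)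
    show "\<exists>u\<in>Field ?R. \<forall>a\<in>C. (a, u) \<in> ?R" if C: "C \<in> Chains ?R" for C
    proof (simp, intro exI conjI ballI)
      have Inf_C: "Inf C \<noteq> bot" "Inf C \<le> F" if "C \<noteq> {}"
      proof -
        from C that have "Inf C = bot \<longleftrightarrow> (\<exists>x\<in>C. x = bot)"
          unfolding trivial_limit_def by (intro eventually_Inf_base) (auto simp: Chains_def)
        with C show "Inf C \<noteq> bot"
          by (simp add: bot_notin_R)
        from that obtain x where "x \<in> C" by auto
        with C show "Inf C \<le> F"
          by (auto intro!: Inf_lower2[of x] simp: Chains_def)
      qed
      then have [simp]: "inf F (Inf C) = (if C = {} then F else Inf C)"
        using C by (auto simp add: inf_absorb2)
      from C show "inf F (Inf C) \<noteq> bot"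
        by (simp add: F Inf_C)
      from C show "inf F (Inf C) \<le> F"
        by (simp add: Chains_def Inf_C F)
      with C show "inf F (Inf C) \<le> x" "x \<le> F" if "x \<in> C" for x
        using that  by (auto intro: Inf_lower simp: Chains_def)
    qed
  qed
  then obtain U where U: "U \<in> Field ?R" "\<forall>a\<in>Field ?R. (U, a) \<in> ?R \<longrightarrow> a = U" ..
  show ?thesis
  proof (intro exI conjI)
    show "U \<le> F" using U by auto
    show "ultra U" using U by (auto intro!: max_filter_ultra)
  qed
qed

lemma ultra_lim_ex:
  fixes f :: "'a \<Rightarrow> real"
  assumes U: "ultra U" and f: "\<And>x. 0 \<le> f x \<and> f x \<le> 1"
  shows "\<exists>L. (f \<longlongrightarrow> L) U"
proof -
  let ?G = "filtermap f U"
  have Gb: "?G \<noteq> bot" using U by (simp add: ultra_def filtermap_bot_iff)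
  have "eventually (\<lambda>x. x \<in> {0..1}) ?G" using f by (simp add: eventually_filtermap)
  then obtain L where "L \<in> {0..1::real}" and L: "inf (nhds L) ?G \<noteq> bot"
    using compact_filter[THEN iffD1, rule_format, OF compact_Icc Gb] by blast
  have "(f \<longlongrightarrow> L) U"
    unfolding tendsto_def
  proof (intro allI impI)
    fix S assume S: "open S" "L \<in> S"
    show "eventually (\<lambda>x. f x \<in> S) U"
    proof (rule ccontr)
      assume "\<not> eventually (\<lambda>x. f x \<in> S) U"
      then have "eventually (\<lambda>x. f x \<notin> S) U" using U unfolding ultra_def by blast
      then have e1: "eventually (\<lambda>y. y \<notin> S) ?G" by (simp add: eventually_filtermap)
      have e2: "eventually (\<lambda>y. y \<in> S) (nhds L)" using S eventually_nhds by blast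
      have "eventually (\<lambda>y. False) (inf (nhds L) ?G)"
        using eventually_inf[of "\<lambda>y. False" "nhds L" ?G] e1 e2 by blast
      then show False using L by (simp add: trivial_limit_def)
    qed
  qed
  then show ?thesis ..
qed

definition ulim :: "'a filter \<Rightarrow> ('a \<Rightarrow> real) \<Rightarrow> real" where
  "ulim U f = Lim U f"

lemma ulim_tendsto:
  assumes U: "ultra U" and f: "\<And>x. 0 \<le> f x \<and> f x \<le> 1"
  shows "(f \<longlongrightarrow> ulim U f) U"
proof -
  obtain L where L: "(f \<longlongrightarrow> L) U" using ultra_lim_ex[of U f] U f by blast
  have "U \<noteq> bot" using U by (simp add: ultra_def)
  then have "Lim U f = L" using L by (simp add: tendsto_Lim)
  then show ?thesis using L by (simp add: ulim_def)
qed

lemma ulim_unique: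
  assumes U: "ultra U" and L: "(f \<longlongrightarrow> L) U"
  shows "ulim U f = L"
  using U L by (simp add: ulim_def ultra_def tendsto_Lim)

definition pt :: "bool list \<Rightarrow> bool list \<Rightarrow> path" where
  "pt p s = (\<lambda>i. if i < length p then p!i else if i < length p + length s then s!(i - length p)
              else i = length p + length s)"

definition Aset :: "bool list \<Rightarrow> path set" where
  "Aset p = pt p ` {s. length s = length p}"

lemma pt_top: "pt p s (length p + length s) = True"
  by (simp add: pt_def)

lemma pt_above: "i > length p + length s \<Longrightarrow> pt p s i = False"
  by (simp add: pt_def)

lemma pt_low: "i < length p \<Longrightarrow> pt p s i = p ! i"
  by (simp add: pt_def)

lemma Aset_disj:
  assumes "p \<noteq> q" shows "Aset p \<inter> Aset q = {}"
proof (rule ccontr)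
  assume "Aset p \<inter> Aset q \<noteq> {}"
  then obtain s s' where s: "length s = length p" and s': "length s' = length q"
    and eq: "pt p s = pt q s'" unfolding Aset_def by auto
  have "length p = length q"
  proof (rule ccontr)
    assume ne: "length p \<noteq> length q"
    show False
    proof (cases "length p < length q")
      case True
      then have "pt p s (length q + length s') = False" using s s' by (intro pt_above) simp
      then show False using eq pt_top[of q s'] by simp
    next
      case False
      then have "length q < length p" using ne by simp
      then have "pt q s' (length p + length s) = False" using s s' by (intro pt_above) simp
      then show False using eq pt_top[of p s] by simp
    qed
  qed
  moreover have "\<forall>i<length p. p ! i = q ! i"
    using eq pt_low[of _ p s] pt_low[of _ q s'] \<open>length p = length q\<close> by metis
  ultimately have "p = q" by (simp add: nth_equalityI)
  then show False using assms by simp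
qed

lemma pt_inj: "inj_on (pt p) {s. length s = length p}"
proof (rule inj_onI)
  fix s s' assume s: "s \<in> {s. length s = length p}" and s': "s' \<in> {s. length s = length p}"
    and eq: "pt p s = pt p s'"
  have "\<forall>j<length s. s ! j = s' ! j"
  proof (intro allI impI)
    fix j assume j: "j < length s"
    have "pt p s (length p + j) = s ! j" using j by (simp add: pt_def)
    moreover have "pt p s' (length p + j) = s' ! j" using j s s' by (simp add: pt_def)
    ultimately show "s ! j = s' ! j" using eq by simp
  qed
  then show "s = s'" using s s' by (simp add: nth_equalityI)
qed

lemma card_lists_bool: "card {s::bool list. length s = n} = 2 ^ n"
  using card_lists_length_eq[of "UNIV :: bool set" n] by simp

lemma finite_lists_bool: "finite {s::bool list. length s = n}"
  using finite_lists_length_eq[of "UNIV :: bool set" n] by simp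

lemma Aset_finite: "finite (Aset p)"
  unfolding Aset_def using finite_lists_bool by simp

lemma Aset_card: "card (Aset p) = 2 ^ length p"
  unfolding Aset_def using card_image[OF pt_inj[of p]] card_lists_bool by simp

definition pre :: "path \<Rightarrow> nat \<Rightarrow> bool list" where
  "pre x n = map x [0..<n]"

lemma pre_length[simp]: "length (pre x n) = n" by (simp add: pre_def)

definition ratio :: "path \<Rightarrow> nat \<Rightarrow> path set \<Rightarrow> real" where
  "ratio x n E = real (card (E \<inter> Aset (pre x n))) / 2 ^ n"

lemma ratio_bounds: "0 \<le> ratio x n E \<and> ratio x n E \<le> 1"
proof -
  have "card (E \<inter> Aset (pre x n)) \<le> card (Aset (pre x n))"
    by (intro card_mono Aset_finite) auto
  then have "real (card (E \<inter> Aset (pre x n))) \<le> 2 ^ n" using Aset_card[of "pre x n"]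
    by (metis of_nat_le_iff of_nat_numeral of_nat_power pre_length)
  then show ?thesis by (simp add: ratio_def)
qed

lemma ratio_UNIV: "ratio x n UNIV = 1"
  by (simp add: ratio_def Aset_card)

lemma ratio_add: "E \<inter> F = {} \<Longrightarrow> ratio x n (E \<union> F) = ratio x n E + ratio x n F"
proof -
  assume d: "E \<inter> F = {}"
  have "(E \<union> F) \<inter> Aset (pre x n) = (E \<inter> Aset (pre x n)) \<union> (F \<inter> Aset (pre x n))" by auto
  moreover have "card (\<dots>) = card (E \<inter> Aset (pre x n)) + card (F \<inter> Aset (pre x n))"
    by (rule card_Un_disjoint) (use d Aset_finite in auto)
  ultimately show ?thesis by (simp add: ratio_def add_divide_distrib)
qed

lemma ratio_mono: "E \<subseteq> F \<Longrightarrow> ratio x n E \<le> ratio x n F"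
proof -
  assume "E \<subseteq> F"
  then have "card (E \<inter> Aset (pre x n)) \<le> card (F \<inter> Aset (pre x n))"
    by (intro card_mono) (auto intro: Aset_finite)
  then show ?thesis by (simp add: ratio_def divide_right_mono)
qed

lemma Aset_cyl: "t \<le> n \<Longrightarrow> Aset (pre x n) \<subseteq> cyl x t"
  by (auto simp: Aset_def cyl_def pt_def pre_def)

lemma ratio_cyl: "t \<le> n \<Longrightarrow> ratio x n (cyl x t) = 1"
proof -
  assume "t \<le> n"
  then have "cyl x t \<inter> Aset (pre x n) = Aset (pre x n)" using Aset_cyl by blast
  then show ?thesis by (simp add: ratio_def Aset_card)
qed

definition Bsel :: "path set \<Rightarrow> real \<Rightarrow> bool list \<Rightarrow> path set" where
  "Bsel E a p = (SOME B. B \<subseteq> E \<inter> Aset p \<and> card B = nat \<lfloor>a * real (card (E \<inter> Aset p))\<rfloor>)"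

definition split :: "path set \<Rightarrow> real \<Rightarrow> path set" where
  "split E a = (\<Union>p. Bsel E a p)"

lemma floor_le_k: "0 \<le> a \<Longrightarrow> a \<le> 1 \<Longrightarrow> nat \<lfloor>a * real k\<rfloor> \<le> k"
proof -
  assume "0 \<le> a" "a \<le> 1"
  then have "a * real k \<le> real k" by (simp add: mult_left_le_one_le)
  then have "\<lfloor>a * real k\<rfloor> \<le> int k" by linarith
  then show ?thesis by simp
qed

lemma Bsel_prop:
  assumes "0 \<le> a" "a \<le> 1"
  shows "Bsel E a p \<subseteq> E \<inter> Aset p \<and> card (Bsel E a p) = nat \<lfloor>a * real (card (E \<inter> Aset p))\<rfloor>"
proof -
  have "nat \<lfloor>a * real (card (E \<inter> Aset p))\<rfloor> \<le> card (E \<inter> Aset p)" using floor_le_k assms by blast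
  then obtain B where "B \<subseteq> E \<inter> Aset p" "card B = nat \<lfloor>a * real (card (E \<inter> Aset p))\<rfloor>"
    by (rule obtain_subset_with_card_n)
  then show ?thesis unfolding Bsel_def by (metis (mono_tags, lifting) someI)
qed

lemma split_Aset:
  assumes "0 \<le> a" "a \<le> 1"
  shows "split E a \<inter> Aset p = Bsel E a p"
proof
  show "split E a \<inter> Aset p \<subseteq> Bsel E a p"
  proof
    fix y assume y: "y \<in> split E a \<inter> Aset p"
    then obtain q where q: "y \<in> Bsel E a q" unfolding split_def by auto
    then have "y \<in> Aset q" using Bsel_prop[OF assms] by blast
    then have "q = p" using y Aset_disj[of q p] by auto
    then show "y \<in> Bsel E a p" using q by simp
  qed
  show "Bsel E a p \<subseteq> split E a \<inter> Aset p" using Bsel_prop[OF assms] unfolding split_def by blast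
qed

lemma split_sub: "0 \<le> a \<Longrightarrow> a \<le> 1 \<Longrightarrow> split E a \<subseteq> E"
  using Bsel_prop unfolding split_def by blast

lemma split_countable:
  assumes "0 \<le> a" "a \<le> 1" shows "countable (split E a)"
proof -
  have "\<And>p. finite (Bsel E a p)" using Bsel_prop[OF assms] Aset_finite
    by (meson finite_Int finite_subset)
  then show ?thesis unfolding split_def by (intro countable_UN) (auto intro: countable_finite)
qed

lemma ratio_split:
  assumes "0 \<le> a" "a \<le> 1"
  shows "\<bar>ratio x n (split E a) - a * ratio x n E\<bar> \<le> (1/2)^n"
proof -
  let ?k = "card (E \<inter> Aset (pre x n))"
  have c: "card (split E a \<inter> Aset (pre x n)) = nat \<lfloor>a * real ?k\<rfloor>"
    using split_Aset[OF assms] Bsel_prop[OF assms] by simp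
  have f0: "0 \<le> \<lfloor>a * real ?k\<rfloor>" using assms by simp
  have r1: "ratio x n (split E a) = real_of_int \<lfloor>a * real ?k\<rfloor> / 2^n"
    unfolding ratio_def c using f0 by simp
  have r2: "a * ratio x n E = (a * real ?k) / 2^n" by (simp add: ratio_def)
  have "\<bar>real_of_int \<lfloor>a * real ?k\<rfloor> - a * real ?k\<bar> \<le> 1"
    by linarith
  then have "\<bar>real_of_int \<lfloor>a * real ?k\<rfloor> / 2^n - (a * real ?k) / 2^n\<bar> \<le> 1 / 2^n"
    by (simp add: diff_divide_distrib[symmetric] abs_divide divide_right_mono)
  then show ?thesis unfolding r1 r2 by (simp add: power_one_over)
qed

definition fu :: "nat filter \<Rightarrow> bool" where
  "fu U \<longleftrightarrow> ultra U \<and> U \<le> sequentially"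

lemma fu_ex: "\<exists>U. fu U"
  using ex_ultra[of "sequentially :: nat filter"] by (auto simp: fu_def)

definition Rm :: "nat filter \<Rightarrow> path \<Rightarrow> path set \<Rightarrow> real" where
  "Rm U x E = ulim U (\<lambda>n. ratio x n E)"

context fixes U assumes U: "fu U"
begin

lemma UU: "ultra U" using U by (simp add: fu_def)
lemma Useq: "U \<le> sequentially" using U by (simp add: fu_def)

lemma Rm_tendsto: "((\<lambda>n. ratio x n E) \<longlongrightarrow> Rm U x E) U"
  unfolding Rm_def by (rule ulim_tendsto[OF UU ratio_bounds])

lemma Rm_bounds: "0 \<le> Rm U x E \<and> Rm U x E \<le> 1"
proof -
  have nb: "U \<noteq> bot" using UU by (simp add: ultra_def)
  have "0 \<le> Rm U x E" by (rule tendsto_lowerbound[OF Rm_tendsto]) (use ratio_bounds nb in auto)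
  moreover have "Rm U x E \<le> 1" by (rule tendsto_upperbound[OF Rm_tendsto]) (use ratio_bounds nb in auto)
  ultimately show ?thesis by simp
qed

lemma Rm_UNIV: "Rm U x UNIV = 1"
  unfolding Rm_def ratio_UNIV by (rule ulim_unique[OF UU]) simp

lemma Rm_add: "E \<inter> F = {} \<Longrightarrow> Rm U x (E \<union> F) = Rm U x E + Rm U x F"
  unfolding Rm_def
  by (rule ulim_unique[OF UU]) (simp add: ratio_add tendsto_add Rm_tendsto[unfolded Rm_def])

lemma Rm_mono: "E \<subseteq> F \<Longrightarrow> Rm U x E \<le> Rm U x F"
proof -
  assume "E \<subseteq> F"
  have nb: "U \<noteq> bot" using UU by (simp add: ultra_def)
  show ?thesis
    by (rule tendsto_le[OF nb Rm_tendsto Rm_tendsto]) (simp add: ratio_mono \<open>E \<subseteq> F\<close>)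
qed

lemma Rm_cyl: "Rm U x (cyl x t) = 1"
proof -
  have "eventually (\<lambda>n. t \<le> n) U" using Useq eventually_ge_at_top filter_leD by blast
  then have "eventually (\<lambda>n. ratio x n (cyl x t) = 1) U" by eventually_elim (simp add: ratio_cyl)
  then have "((\<lambda>n. ratio x n (cyl x t)) \<longlongrightarrow> 1) U"
    by (rule tendsto_eventually[of "\<lambda>n. ratio x n (cyl x t)", OF eventually_mono]) auto
  then show ?thesis unfolding Rm_def by (rule ulim_unique[OF UU])
qed

lemma Rm_open: "open_paths V \<Longrightarrow> x \<in> V \<Longrightarrow> Rm U x V = 1"
proof -
  assume "open_paths V" "x \<in> V"
  then obtain t where "cyl x t \<subseteq> V" unfolding open_paths_def by blast
  then have "1 \<le> Rm U x V" using Rm_mono Rm_cyl by metis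
  then show ?thesis using Rm_bounds by (meson antisym)
qed

lemma Rm_split:
  assumes "0 \<le> a" "a \<le> 1"
  shows "Rm U x (split E a) = a * Rm U x E"
proof -
  have z: "(\<lambda>n. (1/2::real)^n) \<longlonglongrightarrow> 0" by (rule LIMSEQ_realpow_zero) simp_all
  have "(\<lambda>n. ratio x n (split E a) - a * ratio x n E) \<longlonglongrightarrow> 0"
  proof (rule tendsto_sandwich[of "\<lambda>n. - ((1/2)^n)" _ _ "\<lambda>n. (1/2)^n"])
    show "\<forall>\<^sub>F n in sequentially. - ((1 / 2) ^ n) \<le> ratio x n (split E a) - a * ratio x n E"
      using ratio_split[OF assms, of x _ E] by (intro always_eventually allI) (smt (verit))
    show "\<forall>\<^sub>F n in sequentially. ratio x n (split E a) - a * ratio x n E \<le> (1 / 2) ^ n"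
      using ratio_split[OF assms, of x _ E] by (intro always_eventually allI) (smt (verit))
    show "(\<lambda>n. - ((1 / 2::real) ^ n)) \<longlonglongrightarrow> 0" using tendsto_minus[OF z] by simp
    show "(\<lambda>n. (1 / 2::real) ^ n) \<longlonglongrightarrow> 0" by (rule z)
  qed
  then have d: "((\<lambda>n. ratio x n (split E a) - a * ratio x n E) \<longlongrightarrow> 0) U"
    using tendsto_mono[OF Useq] by blast
  have "((\<lambda>n. (ratio x n (split E a) - a * ratio x n E) + a * ratio x n E) \<longlongrightarrow> 0 + a * Rm U x E) U"
    by (intro tendsto_add d tendsto_mult_left Rm_tendsto)
  then have "((\<lambda>n. ratio x n (split E a)) \<longlongrightarrow> a * Rm U x E) U" by simp
  then show ?thesis unfolding Rm_def by (rule ulim_unique[OF UU])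
qed

end

definition good :: "fprob \<Rightarrow> bool" where
  "good Q \<longleftrightarrow> (\<forall>E. 0 \<le> Q E \<and> Q E \<le> 1) \<and> Q UNIV = 1 \<and>
     (\<forall>E F. E \<inter> F = {} \<longrightarrow> Q (E \<union> F) = Q E + Q F) \<and>
     (\<forall>E a. 0 \<le> a \<longrightarrow> a \<le> 1 \<longrightarrow> Q (split E a) = a * Q E)"

lemma singleton_Sig:
  assumes S: "sigma_algebra UNIV Sig" and C: "\<forall>\<omega> t. cyl \<omega> t \<in> Sig"
  shows "{y} \<in> Sig"
proof -
  have "{y} = (\<Inter>t\<in>(UNIV::nat set). cyl y t)"
    by (auto simp: cyl_def fun_eq_iff)
  also have "\<dots> \<in> Sig"
    using C by (intro sigma_algebra.countable_INT''[OF S]) (auto intro: algebra.top[OF sigma_algebra.axioms(1)[OF S]])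
  finally show ?thesis .
qed

lemma split_Sig:
  assumes S: "sigma_algebra UNIV Sig" and C: "\<forall>\<omega> t. cyl \<omega> t \<in> Sig"
    and a: "0 \<le> a" "a \<le> 1"
  shows "split E a \<in> Sig"
  using sigma_algebra.countable[OF S, of "split E a"] singleton_Sig[OF S C] split_countable[OF a]
  by blast

lemma good_opinion:
  assumes S: "sigma_algebra UNIV Sig" and C: "\<forall>\<omega> t. cyl \<omega> t \<in> Sig" and g: "good Q"
  shows "Q \<in> opinions Sig"
  unfolding opinions_def fa_prob_def
proof (intro CollectI conjI ballI allI impI)
  show "\<And>E. E \<in> Sig \<Longrightarrow> 0 \<le> Q E" using g by (simp add: good_def)
  show "Q UNIV = 1" using g by (simp add: good_def)
  show "\<And>E F. E \<inter> F = {} \<Longrightarrow> Q (E \<union> F) = Q E + Q F" using g by (simp add: good_def)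
  fix E and a :: real assume "E \<in> Sig" "0 \<le> a \<and> a \<le> 1"
  then have a: "0 \<le> a" "a \<le> 1" by auto
  show "\<exists>F\<in>Sig. F \<subseteq> E \<and> Q F = a * Q E"
  proof (rule bexI[of _ "split E a"])
    show "split E a \<in> Sig" by (rule split_Sig[OF S C a])
    show "split E a \<subseteq> E \<and> Q (split E a) = a * Q E"
      using split_sub[OF a] g a unfolding good_def by simp
  qed
qed

definition Mix :: "nat filter \<Rightarrow> path list \<Rightarrow> fprob" where
  "Mix U xs E = sum_list (map (\<lambda>y. Rm U y E) xs) / real (length xs)"

lemma sum_list_bounds:
  fixes f :: "'a \<Rightarrow> real"
  assumes "\<And>y. 0 \<le> f y \<and> f y \<le> 1"
  shows "0 \<le> sum_list (map f xs) \<and> sum_list (map f xs) \<le> real (length xs)"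
  using assms by (induction xs) (auto simp: add_mono add_nonneg_nonneg)

lemma good_Mix:
  assumes U: "fu U" and ne: "xs \<noteq> []"
  shows "good (Mix U xs)"
  unfolding good_def
proof (intro conjI allI impI)
  have L: "0 < real (length xs)" using ne by simp
  fix E
  show "0 \<le> Mix U xs E" "Mix U xs E \<le> 1"
    using sum_list_bounds[of "\<lambda>y. Rm U y E" xs] Rm_bounds[OF U] L by (auto simp: Mix_def)
next
  show "Mix U xs UNIV = 1" using ne by (simp add: Mix_def Rm_UNIV[OF U] sum_list_triv)
next
  fix E F :: "path set" assume d: "E \<inter> F = {}"
  show "Mix U xs (E \<union> F) = Mix U xs E + Mix U xs F"
    by (simp add: Mix_def Rm_add[OF U d] sum_list_addf add_divide_distrib)
next
  fix E and a :: real assume a: "0 \<le> a" "a \<le> 1"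
  show "Mix U xs (split E a) = a * Mix U xs E"
    by (simp add: Mix_def Rm_split[OF U a] sum_list_const_mult)
qed

lemma count_le_Mix:
  assumes U: "fu U" and W: "open_paths W"
  shows "real (length (filter (\<lambda>y. y \<in> W) xs)) / real (length xs) \<le> Mix U xs W"
proof -
  have "real (length (filter (\<lambda>y. y \<in> W) xs)) \<le> sum_list (map (\<lambda>y. Rm U y W) xs)"
  proof (induction xs)
    case Nil then show ?case by simp
  next
    case (Cons y ys)
    have b: "0 \<le> Rm U y W" using Rm_bounds[OF U, of y W] by simp
    show ?case
    proof (cases "y \<in> W")
      case True
      then have "Rm U y W = 1" by (rule Rm_open[OF U W])
      then show ?thesis using Cons.IH True by simp
    next
      case False
      then show ?thesis using Cons.IH b by simp
    qed
  qed
  then show ?thesis unfolding Mix_def by (simp add: divide_right_mono)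
qed

lemma good_lim:
  assumes V: "ultra V" and g: "\<And>i. good (Q i)"
  shows "good (\<lambda>E. ulim V (\<lambda>i. Q i E))"
proof -
  have b: "\<And>i E. 0 \<le> Q i E \<and> Q i E \<le> 1" using g by (simp add: good_def)
  have T: "\<And>E. ((\<lambda>i. Q i E) \<longlongrightarrow> ulim V (\<lambda>i. Q i E)) V" by (rule ulim_tendsto[OF V]) (rule b)
  have nb: "V \<noteq> bot" using V by (simp add: ultra_def)
  show ?thesis unfolding good_def
  proof (intro conjI allI impI)
    fix E
    have e1: "\<forall>\<^sub>F i in V. 0 \<le> Q i E" using b by (intro always_eventually allI) simp
    have e2: "\<forall>\<^sub>F i in V. Q i E \<le> 1" using b by (intro always_eventually allI) simp
    show "0 \<le> ulim V (\<lambda>i. Q i E)" by (rule tendsto_lowerbound[OF T e1 nb])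
    show "ulim V (\<lambda>i. Q i E) \<le> 1" by (rule tendsto_upperbound[OF T e2 nb])
  next
    have "\<And>i. Q i UNIV = 1" using g by (simp add: good_def)
    then show "ulim V (\<lambda>i. Q i UNIV) = 1" by (simp add: ulim_unique[OF V])
  next
    fix E F :: "path set" assume d: "E \<inter> F = {}"
    have "((\<lambda>i. Q i (E \<union> F)) \<longlongrightarrow> ulim V (\<lambda>i. Q i E) + ulim V (\<lambda>i. Q i F)) V"
    proof -
      have "\<And>i. Q i (E \<union> F) = Q i E + Q i F" using g d by (simp add: good_def)
      then show ?thesis by (simp add: tendsto_add T)
    qed
    then show "ulim V (\<lambda>i. Q i (E \<union> F)) = ulim V (\<lambda>i. Q i E) + ulim V (\<lambda>i. Q i F)"
      by (rule ulim_unique[OF V])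
  next
    fix E and a :: real assume a: "0 \<le> a" "a \<le> 1"
    have "((\<lambda>i. Q i (split E a)) \<longlongrightarrow> a * ulim V (\<lambda>i. Q i E)) V"
    proof -
      have "\<And>i. Q i (split E a) = a * Q i E" using g a by (simp add: good_def)
      then show ?thesis by (simp add: tendsto_mult_left T)
    qed
    then show "ulim V (\<lambda>i. Q i (split E a)) = a * ulim V (\<lambda>i. Q i E)"
      by (rule ulim_unique[OF V])
  qed
qed

lemma eta_ex:
  fixes c c' :: real assumes "c < c'"
  shows "\<exists>\<eta>>0. 1 + \<eta> * c < (1 + \<eta>) powr c'"
proof -
  let ?F = "\<lambda>z::real. z powr c' - (z - 1) * c"
  have d1: "DERIV (\<lambda>z::real. z powr c') 1 :> c' * 1 powr (c' - 1)"
    by (rule has_real_derivative_powr) simp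
  have d2: "DERIV (\<lambda>z::real. (z - 1) * c) 1 :> 1 * c"
    by (auto intro!: derivative_eq_intros)
  have "DERIV ?F 1 :> c' * 1 powr (c' - 1) - 1 * c"
    by (rule DERIV_diff[OF d1 d2])
  then have "DERIV ?F 1 :> c' - c" by simp
  from DERIV_pos_inc_right[OF this] assms
  obtain d where d: "d > 0" "\<forall>h>0. h < d \<longrightarrow> ?F 1 < ?F (1 + h)" by auto
  moreover have "(0::real) < d/2" "d/2 < d" using d(1) by auto
  ultimately have "?F 1 < ?F (1 + d/2)" by blast
  then have "1 + (d/2) * c < (1 + d/2) powr c'" by simp
  then show ?thesis using d by (intro exI[of _ "d/2"]) auto
qed

context
  fixes S :: "'a set" and g :: "'a \<Rightarrow> 'b \<Rightarrow> bool" and c :: real and b :: real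
  assumes fin: "finite S" and b1: "1 < b"
begin

definition Phi :: "'b list \<Rightarrow> real" where "Phi xs = (\<Sum>P\<in>S. b ^ length (filter (g P) xs))"
definition wt :: "'b list \<Rightarrow> 'a \<Rightarrow> real" where "wt xs P = b ^ length (filter (g P) xs) / Phi xs"
definition nxt :: "'b list \<Rightarrow> 'b" where "nxt xs = (SOME \<omega>. sum (wt xs) {P\<in>S. g P \<omega>} < c)"
definition sq :: "nat \<Rightarrow> 'b list" where "sq n = ((\<lambda>xs. xs @ [nxt xs]) ^^ n) []"

lemma sq_Suc: "sq (Suc n) = sq n @ [nxt (sq n)]" by (simp add: sq_def)
lemma sq_len: "length (sq n) = n" by (induction n) (auto simp: sq_Suc, simp add: sq_def)

lemma Phi_pos: "S \<noteq> {} \<Longrightarrow> 0 < Phi xs"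
  unfolding Phi_def using fin b1 by (intro sum_pos) auto

lemma Phi_snoc:
  assumes ne: "S \<noteq> {}"
  shows "Phi (xs @ [\<omega>]) = Phi xs * (1 + (b - 1) * sum (wt xs) {P\<in>S. g P \<omega>})"
proof -
  have c: "\<And>P. b ^ length (filter (g P) (xs @ [\<omega>])) = b ^ length (filter (g P) xs) + (if g P \<omega> then (b - 1) * b ^ length (filter (g P) xs) else 0)"
    by (simp add:  algebra_simps)
  have "Phi (xs @ [\<omega>]) = Phi xs + (\<Sum>P\<in>S. if g P \<omega> then (b - 1) * b ^ length (filter (g P) xs) else 0)"
    unfolding Phi_def c by (simp add: sum.distrib)
  also have "(\<Sum>P\<in>S. if g P \<omega> then (b - 1) * b ^ length (filter (g P) xs) else 0) = (\<Sum>P\<in>{P\<in>S. g P \<omega>}. (b - 1) * b ^ length (filter (g P) xs))"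
    using fin by (simp add: sum.inter_filter)
  also have "\<dots> = Phi xs * ((b - 1) * sum (wt xs) {P\<in>S. g P \<omega>})"
    using Phi_pos[OF ne, of xs] by (simp add: wt_def sum_distrib_left[symmetric] sum_divide_distrib[symmetric])
  finally show ?thesis by (simp add: algebra_simps)
qed

lemma wt_strategy:
  assumes ne: "S \<noteq> {}"
  shows "(\<forall>P\<in>S. 0 \<le> wt xs P) \<and> sum (wt xs) S = 1"
  using Phi_pos[OF ne, of xs] b1 by (auto simp: wt_def sum_divide_distrib[symmetric] Phi_def[symmetric])

lemma Phi_bound:
  assumes ne: "S \<noteq> {}"
    and resp: "\<And>w. (\<forall>P\<in>S. 0 \<le> w P) \<Longrightarrow> sum w S = 1 \<Longrightarrow> \<exists>\<omega>. sum w {P\<in>S. g P \<omega>} < c"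
  shows "Phi (sq n) \<le> real (card S) * (1 + (b - 1) * c) ^ n"
proof (induction n)
  case 0
  then show ?case by (simp add: sq_def Phi_def )
next
  case (Suc n)
  let ?xs = "sq n"
  have "\<exists>\<omega>. sum (wt ?xs) {P\<in>S. g P \<omega>} < c" using resp wt_strategy[OF ne] by blast
  then have w: "sum (wt ?xs) {P\<in>S. g P (nxt ?xs)} < c" unfolding nxt_def by (rule someI_ex)
  have "Phi (sq (Suc n)) = Phi ?xs * (1 + (b - 1) * sum (wt ?xs) {P\<in>S. g P (nxt ?xs)})"
    by (simp add: sq_Suc Phi_snoc[OF ne])
  also have "\<dots> \<le> Phi ?xs * (1 + (b - 1) * c)"
    using w b1 Phi_pos[OF ne, of ?xs] by (intro mult_left_mono) auto
  also have "\<dots> \<le> real (card S) * (1 + (b - 1) * c) ^ n * (1 + (b - 1) * c)"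
  proof (rule mult_right_mono[OF Suc.IH])
    have "0 \<le> sum (wt ?xs) {P\<in>S. g P (nxt ?xs)}"
      using wt_strategy[OF ne, of ?xs] by (intro sum_nonneg) auto
    then show "0 \<le> 1 + (b - 1) * c" using w b1
      by (smt (verit, best) mult_nonneg_nonneg)
  qed
  finally show ?case by (simp add: mult_ac)
qed

end

lemma mw:
  fixes S :: "'a set" and g :: "'a \<Rightarrow> 'b \<Rightarrow> bool" and c c' :: real
  assumes fin: "finite S" and ne: "S \<noteq> {}" and cc: "c < c'"
    and resp: "\<And>w. (\<forall>P\<in>S. 0 \<le> w P) \<Longrightarrow> sum w S = 1 \<Longrightarrow> \<exists>\<omega>. sum w {P\<in>S. g P \<omega>} < c"
  shows "\<exists>xs. xs \<noteq> [] \<and> (\<forall>P\<in>S. real (length (filter (g P) xs)) \<le> c' * real (length xs))"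
proof -
  obtain \<eta> where eta: "\<eta> > 0" "1 + \<eta> * c < (1 + \<eta>) powr c'" using eta_ex[OF cc] by blast
  define b where "b = 1 + \<eta>"
  have b1: "1 < b" using eta by (simp add: b_def)
  have q0: "0 < 1 + (b - 1) * c"
  proof -
    obtain w0 where "w0 \<in> S" using ne by blast
    define w where "w = (\<lambda>P. if P = w0 then 1 else (0::real))"
    have "(\<forall>P\<in>S. 0 \<le> w P) \<and> sum w S = 1" using fin \<open>w0 \<in> S\<close> by (simp add: w_def)
    then obtain \<omega> where "sum w {P\<in>S. g P \<omega>} < c" using resp by blast
    moreover have "0 \<le> sum w {P\<in>S. g P \<omega>}" by (intro sum_nonneg) (simp add: w_def)
    ultimately have "0 < c" by simp
    then show ?thesis using b1 by (smt (verit) mult_pos_pos)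
  qed
  let ?r = "b powr c' / (1 + (b - 1) * c)"
  have r1: "1 < ?r" using eta q0 by (simp add: b_def)
  obtain N where N: "real (card S) < ?r ^ N" using real_arch_pow[OF r1] by blast
  let ?xs = "sq S g c b N"
  have len: "length ?xs = N" by (rule sq_len[OF fin b1])
  have N0: "N \<noteq> 0" using N fin ne by (auto simp: card_gt_0_iff Suc_le_eq)
  show ?thesis
  proof (intro exI conjI ballI)
    show "?xs \<noteq> []" using len N0 by auto
    fix P assume P: "P \<in> S"
    show "real (length (filter (g P) ?xs)) \<le> c' * real (length ?xs)"
    proof (rule ccontr)
      assume "\<not> ?thesis"
      then have gt: "c' * real N < real (length (filter (g P) ?xs))" using len by simp
      have "b powr (c' * real N) \<le> b powr real (length (filter (g P) ?xs))"
        using gt b1 by (intro powr_mono) auto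
      also have "\<dots> = b ^ length (filter (g P) ?xs)" using b1 by (simp add: powr_realpow)
      also have "\<dots> \<le> Phi S g b ?xs"
        unfolding Phi_def[OF fin b1] using fin P b1
        by (intro member_le_sum) auto
      also have "\<dots> \<le> real (card S) * (1 + (b - 1) * c) ^ N"
        by (rule Phi_bound[OF fin b1 ne resp])
      also have "\<dots> < ?r ^ N * (1 + (b - 1) * c) ^ N"
        using N q0 by (intro mult_strict_right_mono) auto
      also have "\<dots> = (b powr c') ^ N"
        using q0 by (simp add: power_divide)
      also have "\<dots> = b powr (c' * real N)"
        using b1 by (simp add: powr_realpow[symmetric] powr_powr)
      finally show False by simp
    qed
  qed
qed

theorem theorem2:
  fixes Sig :: "path set set" and T :: "fprob \<Rightarrow> path set" and \<epsilon> \<delta> :: real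
  assumes "sigma_algebra UNIV Sig"
    and "\<forall>\<omega> t. cyl \<omega> t \<in> Sig"
    and "0 \<le> \<epsilon>" and "\<epsilon> < 1"
    and "\<forall>P\<in>opinions Sig. open_paths (T P)"
    and "\<forall>P\<in>opinions Sig. P (T P) \<le> \<epsilon>"
    and "0 < \<delta>" and "\<delta> \<le> 1 - \<epsilon>"
  shows "\<exists>S w. strategy (opinions Sig) S w \<and>
           (\<forall>\<omega>. sum w {P\<in>S. \<omega> \<notin> T P} \<ge> 1 - \<epsilon> - \<delta>)"
proof (rule ccontr)
  assume neg: "\<not> ?thesis"
  note SA = assms(1) and CY = assms(2) and OP = assms(5) and CT = assms(6)
  define D where "D = opinions Sig"
  define c where "c = 1 - \<epsilon> - \<delta>"
  define c' where "c' = 1 - \<epsilon> - \<delta> / 2"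
  have cc: "c < c'" using assms by (simp add: c_def c'_def)
  obtain U where U: "fu U" using fu_ex by blast
  let ?ok = "\<lambda>S. finite S \<and> S \<subseteq> D \<and> S \<noteq> {}"
  let ?Pr = "\<lambda>S xs. xs \<noteq> [] \<and> (\<forall>P\<in>S. real (length (filter (\<lambda>\<omega>. \<omega> \<notin> T P) xs)) \<le> c' * real (length xs))"
  have ex: "\<exists>xs. ?Pr S xs" if ok: "?ok S" for S
  proof (rule mw[where S=S and g="\<lambda>P \<omega>. \<omega> \<notin> T P" and c=c and c'=c', OF _ _ cc])
    show "finite S" "S \<noteq> {}" using ok by auto
    fix w :: "fprob \<Rightarrow> real" assume w: "\<forall>P\<in>S. 0 \<le> w P" "sum w S = 1"
    have "strategy D S w" using ok w by (simp add: strategy_def)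
    then have "\<not> (\<forall>\<omega>. sum w {P\<in>S. \<omega> \<notin> T P} \<ge> 1 - \<epsilon> - \<delta>)" using neg D_def by blast
    then show "\<exists>\<omega>. sum w {P\<in>S. \<omega> \<notin> T P} < c" by (auto simp: c_def not_le)
  qed
  define xsOf where "xsOf S = (if ?ok S then (SOME xs. ?Pr S xs) else [undefined])" for S
  have xsP: "?Pr S (xsOf S)" if "?ok S" for S
    using someI_ex[OF ex[OF that]] that by (simp add: xsOf_def)
  have xsne: "xsOf S \<noteq> []" for S
    using xsP[of S] by (cases "?ok S") (auto simp: xsOf_def)
  define Q where "Q S = Mix U (xsOf S)" for S
  have gQ: "good (Q S)" for S unfolding Q_def by (rule good_Mix[OF U xsne])
  obtain V where V: "V \<le> finite_subsets_at_top D" "ultra V"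
    using ex_ultra[of "finite_subsets_at_top D"] by auto
  define Ps where "Ps E = ulim V (\<lambda>S. Q S E)" for E
  have gPs: "good Ps" unfolding Ps_def[abs_def] by (rule good_lim[OF V(2) gQ])
  have PsD: "Ps \<in> D" unfolding D_def by (rule good_opinion[OF SA CY gPs])
  have opn: "open_paths (T Ps)" using OP PsD D_def by blast
  have small: "Ps (T Ps) \<le> \<epsilon>" using CT PsD D_def by blast
  have ev: "eventually (\<lambda>S. ?ok S \<and> Ps \<in> S) V"
  proof -
    have "eventually (\<lambda>S. ?ok S \<and> Ps \<in> S) (finite_subsets_at_top D)"
      unfolding eventually_finite_subsets_at_top using PsD
      by (intro exI[of _ "{Ps}"]) auto
    then show ?thesis using V(1) filter_leD by blast
  qed
  have low: "1 - c' \<le> Q S (T Ps)" if "?ok S \<and> Ps \<in> S" for S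
  proof -
    let ?xs = "xsOf S"
    have P: "?Pr S ?xs" using xsP that by blast
    have L: "0 < real (length ?xs)" using P by simp
    have a: "real (length (filter (\<lambda>\<omega>. \<omega> \<notin> T Ps) ?xs)) \<le> c' * real (length ?xs)"
      using P that by blast
    have s: "length (filter (\<lambda>\<omega>. \<omega> \<in> T Ps) ?xs) + length (filter (\<lambda>\<omega>. \<not> \<omega> \<in> T Ps) ?xs) = length ?xs"
      by (rule sum_length_filter_compl)
    have "(1 - c') * real (length ?xs) \<le> real (length (filter (\<lambda>\<omega>. \<omega> \<in> T Ps) ?xs))"
      using a s by (simp add: algebra_simps)
    then have "1 - c' \<le> real (length (filter (\<lambda>\<omega>. \<omega> \<in> T Ps) ?xs)) / real (length ?xs)"
      using L by (simp add: pos_le_divide_eq)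
    also have "\<dots> \<le> Q S (T Ps)" unfolding Q_def by (rule count_le_Mix[OF U opn])
    finally show ?thesis .
  qed
  have b: "\<And>S. 0 \<le> Q S (T Ps) \<and> Q S (T Ps) \<le> 1" using gQ by (simp add: good_def)
  have "((\<lambda>S. Q S (T Ps)) \<longlongrightarrow> Ps (T Ps)) V" unfolding Ps_def[of "T Ps"] by (rule ulim_tendsto[OF V(2) b])
  moreover have "eventually (\<lambda>S. 1 - c' \<le> Q S (T Ps)) V" using ev by eventually_elim (rule low)
  moreover have "V \<noteq> bot" using V(2) by (simp add: ultra_def)
  ultimately have "1 - c' \<le> Ps (T Ps)" by (rule tendsto_lowerbound)
  then show False using small assms(7) by (simp add: c'_def)
qed

end
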